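(* There is a polynomial-time algorithm that, given a weighted voting game $[q;w_1,\dots,w_n]$, outputs a coalition structure whose social welfare is at least half of the maximum social welfare of any coalition structure of that game.
   Context: A WVG $[q;w_1,\dots,w_n]$ with $q,w_i\in\mathbb R^+$ is the game on $N=\{1,\dots,n\}$ with $v(C)=1$ iff $\sum_{i\in C}w_i\ge q$, else $0$. A coalition structure is a partition $\pi$ of $N$ with social welfare $v(\pi)=\sum_{C\in\pi}v(C)$. *)

theory Defs
  imports Main Complex_Main "HOL-Library.Disjoint_Sets"
begin

definition wvg_value :: "real \<Rightarrow> (nat \<Rightarrow> real) \<Rightarrow> nat set \<Rightarrow> nat" where
  "wvg_value q w C = (if (\<Sum>i\<in>C. w i) \<ge> q then 1 else 0)"

definition coalition_structure :: "nat \<Rightarrow> nat set set \<Rightarrow> bool" where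
  "coalition_structure n \<pi> \<longleftrightarrow> partition_on {1..n} \<pi>"

definition social_welfare :: "real \<Rightarrow> (nat \<Rightarrow> real) \<Rightarrow> nat set set \<Rightarrow> nat" where
  "social_welfare q w \<pi> = (\<Sum>C\<in>\<pi>. wvg_value q w C)"

type_synonym state = "(nat \<Rightarrow> nat) \<times> (nat \<Rightarrow> real)"

datatype nexp = NC nat | NM nexp | NPlus nexp nexp | NMinus nexp nexp
datatype rexp = RofN nexp | RM nexp | RPlus rexp rexp | RMinus rexp rexp | RTimes rexp rexp
datatype bexp = NLess nexp nexp | RLess rexp rexp | RLeq rexp rexp | BNot bexp | BAnd bexp bexp
datatype com = Skip | NAsg nexp nexp | RAsg nexp rexp | Seq com com
  | If bexp com com | While bexp com

fun neval :: "state \<Rightarrow> nexp \<Rightarrow> nat" where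
  "neval s (NC k) = k"
| "neval s (NM a) = fst s (neval s a)"
| "neval s (NPlus a b) = neval s a + neval s b"
| "neval s (NMinus a b) = neval s a - neval s b"

fun reval :: "state \<Rightarrow> rexp \<Rightarrow> real" where
  "reval s (RofN a) = real (neval s a)"
| "reval s (RM a) = snd s (neval s a)"
| "reval s (RPlus a b) = reval s a + reval s b"
| "reval s (RMinus a b) = reval s a - reval s b"
| "reval s (RTimes a b) = reval s a * reval s b"

fun beval :: "state \<Rightarrow> bexp \<Rightarrow> bool" where
  "beval s (NLess a b) = (neval s a < neval s b)"
| "beval s (RLess a b) = (reval s a < reval s b)"
| "beval s (RLeq a b) = (reval s a \<le> reval s b)"
| "beval s (BNot b) = (\<not> beval s b)"
| "beval s (BAnd a b) = (beval s a \<and> beval s b)"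

inductive exec :: "com \<Rightarrow> state \<Rightarrow> nat \<Rightarrow> state \<Rightarrow> bool" where
  Skip: "exec Skip s 1 s"
| NAsg: "exec (NAsg a e) s 1 ((fst s)(neval s a := neval s e), snd s)"
| RAsg: "exec (RAsg a e) s 1 (fst s, (snd s)(neval s a := reval s e))"
| Seq: "exec c1 s t1 s1 \<Longrightarrow> exec c2 s1 t2 s2 \<Longrightarrow> exec (Seq c1 c2) s (t1 + t2) s2"
| IfT: "beval s b \<Longrightarrow> exec c1 s t s' \<Longrightarrow> exec (If b c1 c2) s (t + 1) s'"
| IfF: "\<not> beval s b \<Longrightarrow> exec c2 s t s' \<Longrightarrow> exec (If b c1 c2) s (t + 1) s'"
| WhileF: "\<not> beval s b \<Longrightarrow> exec (While b c) s 1 s"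
| WhileT: "beval s b \<Longrightarrow> exec c s t1 s1 \<Longrightarrow> exec (While b c) s1 t2 s2
           \<Longrightarrow> exec (While b c) s (t1 + t2 + 1) s2"

text \<open>Input encoding of [q; w_1,...,w_n]: nat cell 0 holds n, real cell 0 holds q,
real cell i holds w_i for 1 \<le> i \<le> n; all other cells are 0.\<close>
definition init_state :: "nat \<Rightarrow> real \<Rightarrow> (nat \<Rightarrow> real) \<Rightarrow> state" where
  "init_state n q w = ((\<lambda>i. if i = 0 then n else 0),
                       (\<lambda>i. if i = 0 then q else if i \<le> n then w i else 0))"

text \<open>Output decoding: nat cell i (1 \<le> i \<le> n) holds a label of player i;
players with equal labels form one coalition.\<close>
definition output_cs :: "nat \<Rightarrow> state \<Rightarrow> nat set set" where
  "output_cs n s = (\<lambda>l. {i\<in>{1..n}. fst s i = l}) ` (fst s ` {1..n})"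

end

theory Submission imports Defs begin

definition good :: "nat \<Rightarrow> real \<Rightarrow> (nat \<Rightarrow> real) \<Rightarrow> (nat \<Rightarrow> nat) \<Rightarrow> nat \<Rightarrow> nat \<Rightarrow> real \<Rightarrow> bool" where
 "good n q w L i g a \<longleftrightarrow> 1 \<le> i \<and> i \<le> n+1 \<and> (\<forall>j\<in>{1..<i}. L j \<le> g) \<and>
   (\<forall>l<g. q \<le> (\<Sum>j\<in>{j\<in>{1..<i}. L j = l}. w j)) \<and> (\<Sum>j\<in>{j\<in>{1..<i}. L j = g}. w j) = a \<and>
   0 \<le> a \<and> a < q \<and> (\<Sum>j\<in>{1..<i}. min (w j) q) \<le> 2*q*g + a"

lemma good_step:
  assumes g: "good n q w L i g a" and i: "i \<le> n" and wp: "\<forall>j\<in>{1..n}. w j > 0" and q: "q > 0"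
  shows "good n q w (L(i := g)) (i+1) (if a + w i < q then g else g+1) (if a + w i < q then a + w i else 0)"
proof -
  have i1: "1 \<le> i" using g by (simp add: good_def)
  have wi: "w i > 0" using wp i i1 by auto
  have set: "\<And>l. {j\<in>{1..<i+1}. (L(i:=g)) j = l} = {j\<in>{1..<i}. L j = l} \<union> (if l = g then {i} else {})"
    using i1 by auto
  have sumset: "\<And>l. (\<Sum>j\<in>{j\<in>{1..<i+1}. (L(i:=g)) j = l}. w j) = (\<Sum>j\<in>{j\<in>{1..<i}. L j = l}. w j) + (if l = g then w i else 0)"
    by (subst set, auto simp: sum.union_disjoint)
  have tot: "(\<Sum>j\<in>{1..<i+1}. min (w j) q) = (\<Sum>j\<in>{1..<i}. min (w j) q) + min (w i) q"
    using i1 by simp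
  from g have G: "1 \<le> i" "i \<le> n+1" "\<forall>j\<in>{1..<i}. L j \<le> g"
   "\<forall>l<g. q \<le> (\<Sum>j\<in>{j\<in>{1..<i}. L j = l}. w j)" "(\<Sum>j\<in>{j\<in>{1..<i}. L j = g}. w j) = a"
   "0 \<le> a" "a < q" "(\<Sum>j\<in>{1..<i}. min (w j) q) \<le> 2*q*g + a" by (auto simp: good_def)
  show ?thesis
  proof (cases "a + w i < q")
    case True
    then show ?thesis using G i wi unfolding good_def sumset tot
      by (auto simp: min_def)
  next
    case False
    have Lg: "\<And>x. 1 \<le> x \<Longrightarrow> x < i \<Longrightarrow> L x \<le> g" using G(3) by auto
    have e3: "{j. Suc 0 \<le> j \<and> j < i \<and> L j = Suc g} = {}" using Lg by fastforce
    have e2: "sum w {j. Suc 0 \<le> j \<and> j < i \<and> L j = Suc g} = 0" by (simp only: e3 sum.empty)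
    have m: "min (w i) q \<le> q" by simp
    have c: "(\<Sum>j\<in>{1..<i}. min (w j) q) + min (w i) q < 2 * q * (1 + real g)"
      using G(7,8) m by (simp add: algebra_simps)
    have d: "\<forall>l<Suc g. q \<le> (\<Sum>j\<in>{j\<in>{1..<i}. L j = l}. w j) + (if l = g then w i else 0)"
    proof (intro allI impI)
      fix l assume "l < Suc g"
      then consider "l < g" | "l = g" by linarith
      then show "q \<le> (\<Sum>j\<in>{j\<in>{1..<i}. L j = l}. w j) + (if l = g then w i else 0)"
        by cases (use G(4,5) False wi in auto)
    qed
    have f: "\<forall>j\<in>{1..<i+1}. (L(i:=g)) j \<le> Suc g"
      using G(3) by (auto simp: less_Suc_eq intro: le_SucI)
    show ?thesis using G i wi False c d e2 f q unfolding good_def sumset tot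
      by auto
  qed
qed

lemma coal_bound:
  assumes q: "q > 0" and wp: "\<forall>j\<in>{1..n}. w j > 0" and C: "C \<subseteq> {1..n}"
  shows "real (wvg_value q w C) * q \<le> (\<Sum>j\<in>C. min (w j) q)"
proof (cases "(\<Sum>i\<in>C. w i) \<ge> q")
  case True
  have fin: "finite C" using C finite_subset by blast
  show ?thesis
  proof (cases "\<exists>j\<in>C. w j \<ge> q")
    case True
    then obtain j where j: "j \<in> C" "w j \<ge> q" by blast
    have "q = min (w j) q" using j by simp
    also have "\<dots> \<le> (\<Sum>j\<in>C. min (w j) q)"
      using fin j C wp q by (intro member_le_sum) (auto intro!: min.boundedI less_imp_le)
    finally show ?thesis using \<open>(\<Sum>i\<in>C. w i) \<ge> q\<close> by (simp add: wvg_value_def)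
  next
    case False
    then have "(\<Sum>j\<in>C. min (w j) q) = (\<Sum>j\<in>C. w j)" by (intro sum.cong) auto
    then show ?thesis using True by (simp add: wvg_value_def)
  qed
next
  case False
  have "0 \<le> (\<Sum>j\<in>C. min (w j) q)" using C wp q by (intro sum_nonneg) (auto intro!: min.boundedI less_imp_le)
  then show ?thesis using False by (simp add: wvg_value_def)
qed

lemma opt_bound:
  assumes q: "q > 0" and wp: "\<forall>j\<in>{1..n}. w j > 0" and p: "coalition_structure n \<pi>"
  shows "real (social_welfare q w \<pi>) * q \<le> (\<Sum>j\<in>{1..n}. min (w j) q)"
proof -
  have P: "partition_on {1..n} \<pi>" using p by (simp add: coalition_structure_def)
  have sub: "\<And>C. C \<in> \<pi> \<Longrightarrow> C \<subseteq> {1..n}" using P by (auto simp: partition_on_def)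
  have fin: "finite \<pi>" using P by (metis finite_atLeastAtMost finite_elements)
  have "real (social_welfare q w \<pi>) * q = (\<Sum>C\<in>\<pi>. real (wvg_value q w C) * q)"
    by (simp add: social_welfare_def sum_distrib_right)
  also have "\<dots> \<le> (\<Sum>C\<in>\<pi>. \<Sum>j\<in>C. min (w j) q)"
    by (intro sum_mono coal_bound[OF q wp] sub)
  also have "\<dots> = (\<Sum>j\<in>\<Union>\<pi>. min (w j) q)"
  proof -
    have d: "\<forall>A\<in>\<pi>. \<forall>B\<in>\<pi>. A \<noteq> B \<longrightarrow> A \<inter> B = {}"
      using P unfolding partition_on_def disjoint_def by blast
    have f: "\<forall>A\<in>\<pi>. finite A" using sub finite_subset by blast
    show ?thesis using sum.Union_disjoint[OF f d, of "\<lambda>j. min (w j) q"] by (simp add: comp_def)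
  qed
  also have "\<Union>\<pi> = {1..n}" using P by (simp add: partition_on_def)
  finally show ?thesis .
qed

lemma out_cs: "coalition_structure n (output_cs n s)"
  unfolding coalition_structure_def output_cs_def
  by (rule partition_onI) (auto simp: disjnt_def)

lemma out_bound:
  assumes q: "q > 0" and g: "good n q w L (n+1) g a" and L: "fst s = L"
  shows "g \<le> social_welfare q w (output_cs n s)"
proof -
  define B where "B l = {i\<in>{1..n}. L i = l}" for l
  have Beq: "B l = {j\<in>{1..<n+1}. L j = l}" for l unfolding B_def by auto
  have win: "l < g \<Longrightarrow> q \<le> (\<Sum>j\<in>B l. w j)" for l using g unfolding Beq good_def by auto
  have ne: "l < g \<Longrightarrow> B l \<noteq> {}" for l using win[of l] q by fastforce
  have out: "output_cs n s = B ` (L ` {1..n})" unfolding output_cs_def B_def L ..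
  have subs: "B ` {..<g} \<subseteq> output_cs n s"
  proof
    fix C assume "C \<in> B ` {..<g}"
    then obtain l where l: "l < g" "C = B l" by auto
    then obtain i where "i \<in> B l" using ne by blast
    then have "l \<in> L ` {1..n}" unfolding B_def by auto
    then show "C \<in> output_cs n s" using l out by auto
  qed
  have inj: "inj_on B {..<g}"
  proof
    fix l l' assume "l \<in> {..<g}" "l' \<in> {..<g}" "B l = B l'"
    then obtain i where "i \<in> B l" "i \<in> B l'" using ne by fastforce
    then show "l = l'" unfolding B_def by auto
  qed
  have finout: "finite (output_cs n s)" unfolding output_cs_def by simp
  have "g = (\<Sum>C\<in>B ` {..<g}. wvg_value q w C)"
  proof -
    have "(\<Sum>C\<in>B ` {..<g}. wvg_value q w C) = (\<Sum>l\<in>{..<g}. wvg_value q w (B l))"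
      using inj by (simp add: sum.reindex)
    also have "\<dots> = (\<Sum>l\<in>{..<g}. 1)" using win by (intro sum.cong) (auto simp: wvg_value_def)
    finally show ?thesis by simp
  qed
  also have "\<dots> \<le> social_welfare q w (output_cs n s)"
    unfolding social_welfare_def using finout subs by (intro sum_mono2) auto
  finally show ?thesis .
qed

lemma final:
  assumes q: "q > 0" and wp: "\<forall>j\<in>{1..n}. w j > 0" and g: "good n q w (fst s) (n+1) g a"
    and p: "coalition_structure n \<pi>"
  shows "real (social_welfare q w \<pi>) \<le> 2 * real (social_welfare q w (output_cs n s))"
proof -
  have g1: "(\<Sum>j\<in>{1..<n+1}. min (w j) q) \<le> 2*q*g + a" "a < q" using g by (auto simp: good_def)
  have "{1..<n+1} = {1..n}" by auto
  then have "real (social_welfare q w \<pi>) * q < (2*g+1) * q"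
    using opt_bound[OF q wp p] g1 by (simp add: algebra_simps)
  then have "real (social_welfare q w \<pi>) < 2*g+1" using q by simp
  then have "social_welfare q w \<pi> \<le> 2*g" by linarith
  moreover have "g \<le> social_welfare q w (output_cs n s)" using out_bound[OF q g refl] .
  ultimately show ?thesis by linarith
qed

definition "Ia = NPlus (NM (NC 0)) (NC 1)"
definition "Ga = NPlus (NM (NC 0)) (NC 2)"
definition "c1 = RAsg Ia (RPlus (RM Ia) (RM (NM Ia)))"
definition "c2 = NAsg (NM Ia) (NM Ga)"
definition "c3 = If (RLess (RM Ia) (RM (NC 0))) Skip (Seq (NAsg Ga (NPlus (NM Ga) (NC 1))) (RAsg Ia (RofN (NC 0))))"
definition "c4 = NAsg Ia (NPlus (NM Ia) (NC 1))"
definition "body = Seq c1 (Seq c2 (Seq c3 c4))"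
definition "loop = While (NLess (NM Ia) (NPlus (NM (NC 0)) (NC 1))) body"
definition "init = Seq (NAsg Ia (NC 1)) (Seq (NAsg Ga (NC 0)) (RAsg Ia (RofN (NC 0))))"
definition "prog = Seq init loop"

lemma NAsg': "s' = ((fst s)(neval s a := neval s e), snd s) \<Longrightarrow> exec (NAsg a e) s 1 s'"
  using exec.NAsg by simp
lemma RAsg': "s' = (fst s, (snd s)(neval s a := reval s e)) \<Longrightarrow> exec (RAsg a e) s 1 s'"
  using exec.RAsg by simp

lemma skip1: "exec Skip s (Suc 0) s" using exec.Skip by simp

definition stinv where
  "stinv n q w s \<longleftrightarrow> fst s 0 = n \<and> snd s 0 = q \<and> (\<forall>j\<in>{1..n}. snd s j = w j) \<and>
     good n q w (fst s) (fst s (n+1)) (fst s (n+2)) (snd s (n+1))"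

lemma good_cong: "(\<And>j. j \<in> {1..<i} \<Longrightarrow> L j = L' j) \<Longrightarrow> good n q w L i g a = good n q w L' i g a"
proof -
  assume h: "\<And>j. j \<in> {1..<i} \<Longrightarrow> L j = L' j"
  have "\<And>l. {j\<in>{1..<i}. L j = l} = {j\<in>{1..<i}. L' j = l}" using h by auto
  then show ?thesis using h unfolding good_def by (metis (no_types, lifting))
qed

lemma body_step:
  assumes q: "q > 0" and wp: "\<forall>j\<in>{1..n}. w j > 0" and inv: "stinv n q w s"
    and i: "fst s (n+1) \<le> n"
  shows "\<exists>t s'. exec body s t s' \<and> t \<le> 6 \<and> stinv n q w s' \<and> fst s' (n+1) = fst s (n+1) + 1"
proof -
  define i where "i = fst s (n+1)"
  define g where "g = fst s (n+2)"
  define a where "a = snd s (n+1)"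
  have S: "fst s 0 = n" "snd s 0 = q" "\<forall>j\<in>{1..n}. snd s j = w j" "good n q w (fst s) i g a"
    using inv unfolding stinv_def i_def g_def a_def by auto
  have i1: "1 \<le> i" using S(4) by (simp add: good_def)
  have "i \<le> n" using i i_def by simp
  have x: "snd s i = w i" using S(3) i1 \<open>i \<le> n\<close> by auto
  define g' where "g' = (if a + w i < q then g else g+1)"
  define a' where "a' = (if a + w i < q then a + w i else 0)"
  define s1 where "s1 = (fst s, (snd s)(n+1 := a + w i))"
  define s2 where "s2 = ((fst s)(i := g), (snd s)(n+1 := a + w i))"
  define s3 where "s3 = ((fst s)(i := g, n+2 := g'), (snd s)(n+1 := a'))"
  define s4 where "s4 = ((fst s)(i := g, n+2 := g', n+1 := i+1), (snd s)(n+1 := a'))"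
  have I: "fst s (Suc n) = i" "fst s (Suc (Suc n)) = g" "snd s (Suc n) = a"
    by (simp_all add: i_def g_def a_def)
  have ne: "i \<noteq> 0" "i \<noteq> n+1" "i \<noteq> n+2" using i1 \<open>i \<le> n\<close> by auto
  have e1: "exec c1 s 1 s1" unfolding c1_def
    by (rule RAsg') (simp add: s1_def Ia_def S(1) x I)
  have e2: "exec c2 s1 1 s2" unfolding c2_def
    by (rule NAsg') (simp add: s1_def s2_def Ia_def Ga_def S(1) I)
  have e3: "\<exists>t. exec c3 s2 t s3 \<and> t \<le> 3"
  proof (cases "a + w i < q")
    case True
    have "s3 = s2" unfolding s3_def s2_def g'_def a'_def g_def using True
      by (auto simp: fun_eq_iff)
    moreover have "exec c3 s2 (1+1) s2" unfolding c3_def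
      by (rule exec.IfT) (auto simp: skip1 s2_def Ia_def S ne True)
    ultimately show ?thesis by auto
  next
    case False
    define s25 where "s25 = ((fst s)(i := g, n+2 := g+1), (snd s)(n+1 := a + w i))"
    have "exec (NAsg Ga (NPlus (NM Ga) (NC 1))) s2 1 s25"
      by (rule NAsg') (simp add: s2_def s25_def Ga_def S ne I)
    moreover have "exec (RAsg Ia (RofN (NC 0))) s25 1 s3"
      by (rule RAsg') (simp add: s25_def s3_def Ia_def S ne g'_def a'_def False)
    ultimately have "exec c3 s2 ((1+1)+1) s3" unfolding c3_def
      by (intro exec.IfF exec.Seq) (auto simp: s2_def Ia_def S ne False)
    then show ?thesis by auto
  qed
  have e4: "exec c4 s3 1 s4" unfolding c4_def
    by (rule NAsg') (use ne in \<open>simp add: s3_def s4_def Ia_def S I\<close>)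
  obtain t3 where t3: "exec c3 s2 t3 s3" "t3 \<le> 3" using e3 by blast
  have eb: "exec body s (1 + (1 + (t3 + 1))) s4" unfolding body_def
    using e1 e2 t3(1) e4 by (intro exec.Seq)
  have gs: "good n q w ((fst s)(i := g)) (i+1) g' a'"
    unfolding g'_def a'_def using good_step[OF S(4) \<open>i \<le> n\<close> wp q] .
  have gs4: "good n q w (fst s4) (i+1) g' a'"
    by (rule good_cong[THEN iffD1, OF _ gs]) (use \<open>i \<le> n\<close> in \<open>auto simp: s4_def\<close>)
  have "stinv n q w s4" unfolding stinv_def
    using gs4 S ne by (auto simp: s4_def)
  moreover have "fst s4 (n+1) = fst s (n+1) + 1" by (simp add: s4_def i_def)
  ultimately show ?thesis using eb t3(2) by (intro exI[of _ "1 + (1 + (t3 + 1))"] exI[of _ s4]) auto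
qed

lemma loop_run:
  assumes q: "q > 0" and wp: "\<forall>j\<in>{1..n}. w j > 0"
  shows "\<forall>s. n + 1 - fst s (n+1) = m \<longrightarrow> stinv n q w s \<longrightarrow>
     (\<exists>t s'. exec loop s t s' \<and> t \<le> 7*m + 1 \<and> stinv n q w s' \<and> fst s' (n+1) = n+1)"
proof (induction m)
  case 0
  show ?case
  proof (intro allI impI)
    fix s assume m: "n + 1 - fst s (n+1) = 0" and inv: "stinv n q w s"
    have "fst s (n+1) \<le> n+1" using inv by (simp add: stinv_def good_def)
    then have eq: "fst s (n+1) = n+1" using m by simp
    have "exec loop s 1 s" unfolding loop_def
      by (rule exec.WhileF) (use inv eq in \<open>simp add: Ia_def stinv_def\<close>)
    then show "\<exists>t s'. exec loop s t s' \<and> t \<le> 7*0 + 1 \<and> stinv n q w s' \<and> fst s' (n+1) = n+1"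
      using inv eq by (intro exI[of _ 1] exI[of _ s]) auto
  qed
next
  case (Suc m)
  show ?case
  proof (intro allI impI)
    fix s assume m: "n + 1 - fst s (n+1) = Suc m" and inv: "stinv n q w s"
    then have le: "fst s (n+1) \<le> n" by simp
    obtain t s' where b: "exec body s t s'" "t \<le> 6" "stinv n q w s'" "fst s' (n+1) = fst s (n+1) + 1"
      using body_step[OF q wp inv le] by blast
    have "n + 1 - fst s' (n+1) = m" using b(4) m by simp
    then obtain t2 s2 where r: "exec loop s' t2 s2" "t2 \<le> 7*m + 1" "stinv n q w s2" "fst s2 (n+1) = n+1"
      using Suc.IH b(3) by blast
    have "exec loop s (t + t2 + 1) s2" unfolding loop_def
      by (rule exec.WhileT[OF _ b(1) r(1)[unfolded loop_def]]) (use inv le in \<open>simp add: Ia_def stinv_def\<close>)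
    then show "\<exists>t s'. exec loop s t s' \<and> t \<le> 7*Suc m + 1 \<and> stinv n q w s' \<and> fst s' (n+1) = n+1"
      using b(2) r by (intro exI[of _ "t + t2 + 1"] exI[of _ s2]) auto
  qed
qed

theorem proposition8:
  "\<exists>(P::com) (c::nat) (k::nat). \<forall>(n::nat) (q::real) (w::nat \<Rightarrow> real).
     q > 0 \<and> (\<forall>i\<in>{1..n}. w i > 0) \<longrightarrow>
     (\<exists>t s. exec P (init_state n q w) t s \<and> t \<le> c * (n + 1) ^ k \<and>
        coalition_structure n (output_cs n s) \<and>
        (\<forall>\<pi>. coalition_structure n \<pi> \<longrightarrow>
             real (social_welfare q w \<pi>) \<le> 2 * real (social_welfare q w (output_cs n s))))"
proof -
  have main: "\<exists>t s. exec prog (init_state n q w) t s \<and> t \<le> 11 * (n + 1) ^ 1 \<and>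
        coalition_structure n (output_cs n s) \<and>
        (\<forall>\<pi>. coalition_structure n \<pi> \<longrightarrow>
             real (social_welfare q w \<pi>) \<le> 2 * real (social_welfare q w (output_cs n s)))"
    if q: "q > 0" and wp: "\<forall>j\<in>{1..n}. w j > 0" for n :: nat and q :: real and w :: "nat \<Rightarrow> real"
  proof -
  define s0 where "s0 = init_state n q w"
  define sA where "sA = ((fst s0)(n+1 := 1), snd s0)"
  define sB where "sB = ((fst s0)(n+1 := 1, n+2 := 0), snd s0)"
  define sC where "sC = ((fst s0)(n+1 := 1, n+2 := 0), (snd s0)(n+1 := 0))"
  have f0: "fst s0 0 = n" "snd s0 0 = q" "\<And>j. j \<in> {1..n} \<Longrightarrow> snd s0 j = w j"
    by (auto simp: s0_def init_state_def)
  have ei: "exec init s0 (1 + (1 + 1)) sC" unfolding init_def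
  proof (intro exec.Seq)
    show "exec (NAsg Ia (NC 1)) s0 1 sA" by (rule NAsg') (simp add: sA_def Ia_def f0)
    show "exec (NAsg Ga (NC 0)) sA 1 sB" by (rule NAsg') (simp add: sA_def sB_def Ga_def f0)
    show "exec (RAsg Ia (RofN (NC 0))) sB 1 sC" by (rule RAsg') (simp add: sB_def sC_def Ia_def f0)
  qed
  have invC: "stinv n q w sC"
    unfolding stinv_def good_def using f0 q by (auto simp: sC_def)
  obtain t s where r: "exec loop sC t s" "t \<le> 7*n + 1" "stinv n q w s" "fst s (n+1) = n+1"
    using loop_run[OF q wp, rule_format, of sC n] invC by (auto simp: sC_def)
  have ex: "exec prog (init_state n q w) (3 + t) s" unfolding prog_def s0_def[symmetric]
    using exec.Seq[OF ei r(1)] by (simp add: numeral_3_eq_3)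
  have g: "good n q w (fst s) (n+1) (fst s (n+2)) (snd s (n+1))" using r(3,4) by (simp add: stinv_def)
  show "\<exists>t s. exec prog (init_state n q w) t s \<and> t \<le> 11 * (n + 1) ^ 1 \<and>
        coalition_structure n (output_cs n s) \<and>
        (\<forall>\<pi>. coalition_structure n \<pi> \<longrightarrow>
             real (social_welfare q w \<pi>) \<le> 2 * real (social_welfare q w (output_cs n s)))"
    using ex r(2) out_cs final[OF q wp g] by (intro exI[of _ "3 + t"] exI[of _ s]) auto
  qed
  show ?thesis by (intro exI[of _ prog] exI[of _ 11] exI[of _ 1] allI impI main) auto
qed

end
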